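(* Let $R$ be an arithmetic ring, $M$ a finitely generated $R$-module, and $\{0\}=M_0\subset M_1\subset\dots\subset M_n=M$ a pure-composition series of $M$ with $M_i/M_{i-1}=R(x_i+M_{i-1})$ for $1\le i\le n$, whose annihilator sequence $(A_i)_{1\le i\le n}$, $A_i=\mathrm{ann}(M_i/M_{i-1})$, is increasing ($A_1\subseteq\dots\subseteq A_n$). If $c_1,\dots,c_n\in R$ satisfy $\sum_{i=1}^n c_ix_i=0$, then $c_i\in A_n$ for every $i$.
   Context: All rings are commutative with identity. $R$ is arithmetic if $R_P$ is a valuation ring for every maximal ideal $P$. A submodule is pure if its inclusion stays injective after tensoring with any module; a pure-composition series is a finite chain of pure submodules from $0$ to $M$. *)

theory Defs
  imports "HOL-Algebra.Module" "HOL-Algebra.Ideal" "HOL-Algebra.FiniteProduct"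
begin

text \<open>Divisibility of fractions in the localization R_P (elements a/s with s not in P):
  a/s divides b/t in R_P iff b/t = (r/u)(a/s) for some r in R and u not in P, i.e.
  v (b u s - r a t) = 0 for some v not in P.\<close>
definition loc_dvd :: "('a, 'b) ring_scheme \<Rightarrow> 'a set \<Rightarrow> 'a \<times> 'a \<Rightarrow> 'a \<times> 'a \<Rightarrow> bool" where
  "loc_dvd R P x y \<longleftrightarrow>
     (\<exists>r\<in>carrier R. \<exists>u\<in>carrier R - P. \<exists>v\<in>carrier R - P.
        v \<otimes>\<^bsub>R\<^esub> (fst y \<otimes>\<^bsub>R\<^esub> (u \<otimes>\<^bsub>R\<^esub> snd x))
      = v \<otimes>\<^bsub>R\<^esub> (r \<otimes>\<^bsub>R\<^esub> (fst x \<otimes>\<^bsub>R\<^esub> snd y)))"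

text \<open>R_P is a valuation ring (in the sense of commutative, not necessarily domain, rings:
  any two elements are comparable under divisibility, i.e. the ideals form a chain).\<close>
definition localization_is_valuation :: "('a, 'b) ring_scheme \<Rightarrow> 'a set \<Rightarrow> bool" where
  "localization_is_valuation R P \<longleftrightarrow>
     (\<forall>a\<in>carrier R. \<forall>s\<in>carrier R - P. \<forall>b\<in>carrier R. \<forall>t\<in>carrier R - P.
        loc_dvd R P (a, s) (b, t) \<or> loc_dvd R P (b, t) (a, s))"

definition arithmetic_ring :: "('a, 'b) ring_scheme \<Rightarrow> bool" where
  "arithmetic_ring R \<longleftrightarrow> cring R \<and>
     (\<forall>P. maximalideal P R \<longrightarrow> localization_is_valuation R P)"

definition fin_gen_module :: "('a, 'c) ring_scheme \<Rightarrow> ('a, 'b, 'd) module_scheme \<Rightarrow> bool" where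
  "fin_gen_module R M \<longleftrightarrow>
     (\<exists>S. finite S \<and> S \<subseteq> carrier M \<and>
        (\<forall>m\<in>carrier M. \<exists>a. a \<in> S \<rightarrow> carrier R \<and>
            m = finsum M (\<lambda>s. a s \<odot>\<^bsub>M\<^esub> s) S))"

text \<open>A formal sum is a finitely supported function  M x E -> R.  The tensor product
  M (x)_R E is the module of formal sums supported in carrier M x carrier E modulo the
  submodule tensor_rel R M E spanned by the bilinearity relations.\<close>

definition fdelta :: "('a, 'c) ring_scheme \<Rightarrow> 'm \<times> 'e \<Rightarrow> ('m \<times> 'e \<Rightarrow> 'a)" where
  "fdelta R p = (\<lambda>q. if q = p then \<one>\<^bsub>R\<^esub> else \<zero>\<^bsub>R\<^esub>)"

definition fsum_in :: "('a, 'c) ring_scheme \<Rightarrow> 'm set \<Rightarrow> 'e set \<Rightarrow> ('m \<times> 'e \<Rightarrow> 'a) \<Rightarrow> bool" where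
  "fsum_in R A B f \<longleftrightarrow> (\<forall>p. f p \<in> carrier R) \<and> finite {p. f p \<noteq> \<zero>\<^bsub>R\<^esub>}
      \<and> {p. f p \<noteq> \<zero>\<^bsub>R\<^esub>} \<subseteq> A \<times> B"

definition tensor_gens :: "('a, 'c) ring_scheme \<Rightarrow> ('a, 'm, 'd) module_scheme \<Rightarrow>
    ('a, 'e, 'g) module_scheme \<Rightarrow> ('m \<times> 'e \<Rightarrow> 'a) set" where
  "tensor_gens R M E =
     {(\<lambda>q. fdelta R (m \<oplus>\<^bsub>M\<^esub> m', e) q \<ominus>\<^bsub>R\<^esub> fdelta R (m, e) q \<ominus>\<^bsub>R\<^esub> fdelta R (m', e) q)
        | m m' e. m \<in> carrier M \<and> m' \<in> carrier M \<and> e \<in> carrier E}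
   \<union> {(\<lambda>q. fdelta R (m, e \<oplus>\<^bsub>E\<^esub> e') q \<ominus>\<^bsub>R\<^esub> fdelta R (m, e) q \<ominus>\<^bsub>R\<^esub> fdelta R (m, e') q)
        | m e e'. m \<in> carrier M \<and> e \<in> carrier E \<and> e' \<in> carrier E}
   \<union> {(\<lambda>q. fdelta R (r \<odot>\<^bsub>M\<^esub> m, e) q \<ominus>\<^bsub>R\<^esub> r \<otimes>\<^bsub>R\<^esub> fdelta R (m, e) q)
        | r m e. r \<in> carrier R \<and> m \<in> carrier M \<and> e \<in> carrier E}
   \<union> {(\<lambda>q. fdelta R (m, r \<odot>\<^bsub>E\<^esub> e) q \<ominus>\<^bsub>R\<^esub> r \<otimes>\<^bsub>R\<^esub> fdelta R (m, e) q)
        | r m e. r \<in> carrier R \<and> m \<in> carrier M \<and> e \<in> carrier E}"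

inductive_set tensor_rel :: "('a, 'c) ring_scheme \<Rightarrow> ('a, 'm, 'd) module_scheme \<Rightarrow>
    ('a, 'e, 'g) module_scheme \<Rightarrow> ('m \<times> 'e \<Rightarrow> 'a) set"
  for R M E where
  zero: "(\<lambda>q. \<zero>\<^bsub>R\<^esub>) \<in> tensor_rel R M E"
| step: "f \<in> tensor_rel R M E \<Longrightarrow> g \<in> tensor_gens R M E \<Longrightarrow> r \<in> carrier R \<Longrightarrow>
         (\<lambda>q. f q \<oplus>\<^bsub>R\<^esub> r \<otimes>\<^bsub>R\<^esub> g q) \<in> tensor_rel R M E"

text \<open>The canonical map N (x) E -> M (x) E is induced by the identity on formal sums;
  it is injective iff every formal sum on N x E that is a relation in M (x) E is already
  a relation in N (x) E.  Test modules E range over all R-modules whose elements have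
  type ((nat => 'a) set) (this covers, up to isomorphism, every finitely presented and
  indeed every countably generated R-module).\<close>
definition tensor_injective :: "('a, 'c) ring_scheme \<Rightarrow> ('a, 'm, 'd) module_scheme \<Rightarrow>
    'm set \<Rightarrow> bool" where
  "tensor_injective R M N \<longleftrightarrow>
     (\<forall>E :: ('a, (nat \<Rightarrow> 'a) set) module. module R E \<longrightarrow>
        (\<forall>f. fsum_in R N (carrier E) f \<and> f \<in> tensor_rel R M E \<longrightarrow>
             f \<in> tensor_rel R (M\<lparr>carrier := N\<rparr>) E))"

definition pure_submodule :: "('a, 'c) ring_scheme \<Rightarrow> ('a, 'm, 'd) module_scheme \<Rightarrow> 'm set \<Rightarrow> bool" where
  "pure_submodule R M N \<longleftrightarrow> submodule N R M \<and>
     tensor_injective R M N"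

definition ann_quot :: "('a, 'c) ring_scheme \<Rightarrow> ('a, 'm, 'd) module_scheme \<Rightarrow> 'm set \<Rightarrow> 'm set \<Rightarrow> 'a set" where
  "ann_quot R M A B = {r \<in> carrier R. \<forall>m\<in>B. r \<odot>\<^bsub>M\<^esub> m \<in> A}"

end

theory Submission
  imports Defs
begin
definition qcls :: "('a,'c) ring_scheme \<Rightarrow> 'a \<Rightarrow> 'a \<Rightarrow> (nat \<Rightarrow> 'a) set" where
 "qcls R c a = {g. g 0 \<in> carrier R \<and> (\<exists>t\<in>carrier R. g 0 = a \<oplus>\<^bsub>R\<^esub> c \<otimes>\<^bsub>R\<^esub> t)}"

definition qrep :: "('a,'c) ring_scheme \<Rightarrow> 'a \<Rightarrow> (nat \<Rightarrow> 'a) set \<Rightarrow> 'a" where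
 "qrep R c X = (SOME a. a \<in> carrier R \<and> X = qcls R c a)"

definition qmod :: "('a,'c) ring_scheme \<Rightarrow> 'a \<Rightarrow> ('a, (nat\<Rightarrow>'a) set) module" where
 "qmod R c = \<lparr>carrier = qcls R c ` carrier R, mult = (\<lambda>_ _. {}), one = {},
    zero = qcls R c \<zero>\<^bsub>R\<^esub>,
    add = (\<lambda>X Y. qcls R c (qrep R c X \<oplus>\<^bsub>R\<^esub> qrep R c Y)),
    smult = (\<lambda>r X. qcls R c (r \<otimes>\<^bsub>R\<^esub> qrep R c X))\<rparr>"

context cring begin

lemma qcls_eq:
  assumes c: "c \<in> carrier R" and a: "a \<in> carrier R" and b: "b \<in> carrier R"
  shows "qcls R c a = qcls R c b \<longleftrightarrow> (\<exists>t\<in>carrier R. a = b \<oplus> c \<otimes> t)"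
proof
  assume h: "qcls R c a = qcls R c b"
  have "(\<lambda>_. a) \<in> qcls R c a" unfolding qcls_def using a c
    by (auto intro!: bexI[of _ \<zero>])
  then show "\<exists>t\<in>carrier R. a = b \<oplus> c \<otimes> t" using h unfolding qcls_def by auto
next
  assume "\<exists>t\<in>carrier R. a = b \<oplus> c \<otimes> t"
  then obtain t where t: "t \<in> carrier R" "a = b \<oplus> c \<otimes> t" by blast
  show "qcls R c a = qcls R c b"
  proof (intro Set.set_eqI iffI)
    fix g assume "g \<in> qcls R c a"
    then obtain s where s: "s \<in> carrier R" "g 0 = a \<oplus> c \<otimes> s" "g 0 \<in> carrier R"
      unfolding qcls_def by auto
    have "g 0 = b \<oplus> c \<otimes> (t \<oplus> s)" using s t a b c by (simp add: r_distr a_assoc)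
    then show "g \<in> qcls R c b" using s t unfolding qcls_def by auto
  next
    fix g assume "g \<in> qcls R c b"
    then obtain s where s: "s \<in> carrier R" "g 0 = b \<oplus> c \<otimes> s" "g 0 \<in> carrier R"
      unfolding qcls_def by auto
    have "g 0 = a \<oplus> c \<otimes> (s \<ominus> t)" using s t a b c
      by (simp add: minus_eq r_distr a_assoc r_minus a_comm a_lcomm r_neg)
    then show "g \<in> qcls R c a" using s t unfolding qcls_def by auto
  qed
qed

lemma qrep_cls:
  assumes a: "a \<in> carrier R"
  shows "qrep R c (qcls R c a) \<in> carrier R \<and> qcls R c (qrep R c (qcls R c a)) = qcls R c a"
  unfolding qrep_def by (rule someI2[of _ a]) (use a in auto)

lemma qcls_add_cong:
  assumes c: "c \<in> carrier R" and R: "a \<in> carrier R" "a' \<in> carrier R" "b \<in> carrier R" "b' \<in> carrier R"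
    and e: "qcls R c a = qcls R c a'" "qcls R c b = qcls R c b'"
  shows "qcls R c (a \<oplus> b) = qcls R c (a' \<oplus> b')"
proof -
  have "\<exists>t\<in>carrier R. a = a' \<oplus> c \<otimes> t" using e(1) qcls_eq[OF c R(1) R(2)] by simp
  then obtain t where t: "t \<in> carrier R" "a = a' \<oplus> c \<otimes> t" by (elim bexE)
  have "\<exists>t\<in>carrier R. b = b' \<oplus> c \<otimes> t" using e(2) qcls_eq[OF c R(3) R(4)] by simp
  then obtain s where s: "s \<in> carrier R" "b = b' \<oplus> c \<otimes> s" by (elim bexE)
  note ts = t s
  have "a \<oplus> b = (a' \<oplus> b') \<oplus> c \<otimes> (t \<oplus> s)" using ts R c by (simp add: r_distr a_ac)
  then show ?thesis
    by (intro iffD2[OF qcls_eq[OF c a_closed[OF R(1,3)] a_closed[OF R(2,4)]]] bexI[of _ "t \<oplus> s"])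
      (use ts in simp_all)
qed

lemma qcls_mult_cong:
  assumes c: "c \<in> carrier R" and R: "a \<in> carrier R" "a' \<in> carrier R" "r \<in> carrier R"
    and e: "qcls R c a = qcls R c a'"
  shows "qcls R c (r \<otimes> a) = qcls R c (r \<otimes> a')"
proof -
  have "\<exists>t\<in>carrier R. a = a' \<oplus> c \<otimes> t" using e qcls_eq[OF c R(1) R(2)] by simp
  then obtain t where ts: "t \<in> carrier R" "a = a' \<oplus> c \<otimes> t" by (elim bexE)
  have "r \<otimes> a = r \<otimes> a' \<oplus> c \<otimes> (r \<otimes> t)" using ts R c by (simp add: r_distr m_lcomm)
  then show ?thesis
    by (intro iffD2[OF qcls_eq[OF c m_closed[OF R(3,1)] m_closed[OF R(3,2)]]] bexI[of _ "r \<otimes> t"])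
      (use ts R in simp_all)
qed

lemma qmod_add: assumes c: "c \<in> carrier R" "a \<in> carrier R" "b \<in> carrier R"
  shows "qcls R c a \<oplus>\<^bsub>qmod R c\<^esub> qcls R c b = qcls R c (a \<oplus> b)"
proof -
  have "qcls R c (qrep R c (qcls R c a) \<oplus> qrep R c (qcls R c b)) = qcls R c (a \<oplus> b)"
    by (rule qcls_add_cong[OF c(1)]) (use assms qrep_cls[of a] qrep_cls[of b] in simp_all)
  then show ?thesis by (simp add: qmod_def)
qed

lemma qmod_smult: assumes c: "c \<in> carrier R" "a \<in> carrier R" "r \<in> carrier R"
  shows "r \<odot>\<^bsub>qmod R c\<^esub> qcls R c a = qcls R c (r \<otimes> a)"
proof -
  have "qcls R c (r \<otimes> qrep R c (qcls R c a)) = qcls R c (r \<otimes> a)"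
    by (rule qcls_mult_cong[OF c(1)]) (use assms qrep_cls[of a] in simp_all)
  then show ?thesis by (simp add: qmod_def)
qed

lemma qmod_carrier: "carrier (qmod R c) = qcls R c ` carrier R"
  by (simp add: qmod_def)
lemma qmod_zero: "\<zero>\<^bsub>qmod R c\<^esub> = qcls R c \<zero>"
  by (simp add: qmod_def)

lemma qmod_module: assumes c: "c \<in> carrier R" shows "module R (qmod R c)"
proof (rule moduleI)
  show "cring R" by (rule is_cring)
  show "abelian_group (qmod R c)"
  proof (rule abelian_groupI)
    fix x y z assume "x \<in> carrier (qmod R c)" "y \<in> carrier (qmod R c)" "z \<in> carrier (qmod R c)"
    then obtain a b d where abd: "a \<in> carrier R" "b \<in> carrier R" "d \<in> carrier R"
      "x = qcls R c a" "y = qcls R c b" "z = qcls R c d" by (auto simp: qmod_carrier)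
    show "x \<oplus>\<^bsub>qmod R c\<^esub> y \<in> carrier (qmod R c)"
      using abd c by (simp add: qmod_add qmod_carrier)
    show "x \<oplus>\<^bsub>qmod R c\<^esub> y \<oplus>\<^bsub>qmod R c\<^esub> z = x \<oplus>\<^bsub>qmod R c\<^esub> (y \<oplus>\<^bsub>qmod R c\<^esub> z)"
      using abd c by (simp add: qmod_add a_assoc)
    show "x \<oplus>\<^bsub>qmod R c\<^esub> y = y \<oplus>\<^bsub>qmod R c\<^esub> x"
      using abd c by (simp add: qmod_add a_comm)
    show "\<zero>\<^bsub>qmod R c\<^esub> \<oplus>\<^bsub>qmod R c\<^esub> x = x"
      using abd c by (simp add: qmod_add qmod_zero)
    have "qcls R c (\<ominus> a) \<in> carrier (qmod R c)" using abd by (simp add: qmod_carrier)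
    moreover have "qcls R c (\<ominus> a) \<oplus>\<^bsub>qmod R c\<^esub> x = \<zero>\<^bsub>qmod R c\<^esub>"
      using abd c by (simp add: qmod_add qmod_zero l_neg)
    ultimately show "\<exists>y\<in>carrier (qmod R c). y \<oplus>\<^bsub>qmod R c\<^esub> x = \<zero>\<^bsub>qmod R c\<^esub>" by blast
  next
    show "\<zero>\<^bsub>qmod R c\<^esub> \<in> carrier (qmod R c)" by (simp add: qmod_carrier qmod_zero)
  qed
next
  fix r x assume "r \<in> carrier R" "x \<in> carrier (qmod R c)"
  then show "r \<odot>\<^bsub>qmod R c\<^esub> x \<in> carrier (qmod R c)"
    using c by (auto simp: qmod_smult qmod_carrier)
next
  fix r s x assume "r \<in> carrier R" "s \<in> carrier R" "x \<in> carrier (qmod R c)"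
  then show "(r \<oplus> s) \<odot>\<^bsub>qmod R c\<^esub> x = r \<odot>\<^bsub>qmod R c\<^esub> x \<oplus>\<^bsub>qmod R c\<^esub> s \<odot>\<^bsub>qmod R c\<^esub> x"
    using c by (auto simp: qmod_carrier qmod_smult qmod_add l_distr)
next
  fix r x y assume "r \<in> carrier R" "x \<in> carrier (qmod R c)" "y \<in> carrier (qmod R c)"
  then show "r \<odot>\<^bsub>qmod R c\<^esub> (x \<oplus>\<^bsub>qmod R c\<^esub> y) = r \<odot>\<^bsub>qmod R c\<^esub> x \<oplus>\<^bsub>qmod R c\<^esub> r \<odot>\<^bsub>qmod R c\<^esub> y"
    using c by (auto simp: qmod_carrier qmod_smult qmod_add r_distr)
next
  fix r s x assume "r \<in> carrier R" "s \<in> carrier R" "x \<in> carrier (qmod R c)"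
  then show "(r \<otimes> s) \<odot>\<^bsub>qmod R c\<^esub> x = r \<odot>\<^bsub>qmod R c\<^esub> (s \<odot>\<^bsub>qmod R c\<^esub> x)"
    using c by (auto simp: qmod_carrier qmod_smult m_assoc)
next
  fix x assume "x \<in> carrier (qmod R c)"
  then show "\<one> \<odot>\<^bsub>qmod R c\<^esub> x = x"
    using c by (auto simp: qmod_carrier qmod_smult)
qed

end

definition phi :: "('a,'b) ring_scheme \<Rightarrow> ('a,'m,'d) module_scheme \<Rightarrow> 'a \<Rightarrow> ('m \<times> (nat\<Rightarrow>'a) set) set \<Rightarrow> ('m \<times> (nat\<Rightarrow>'a) set \<Rightarrow> 'a) \<Rightarrow> 'm" where
  "phi R M c S h = finsum M (\<lambda>p. h p \<odot>\<^bsub>M\<^esub> (qrep R c (snd p) \<odot>\<^bsub>M\<^esub> fst p)) S"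

definition good :: "('a,'b) ring_scheme \<Rightarrow> ('a,'m,'d) module_scheme \<Rightarrow> 'a \<Rightarrow> 'm set \<Rightarrow> ('m \<times> (nat\<Rightarrow>'a) set \<Rightarrow> 'a) \<Rightarrow> bool" where
  "good R M c N h \<longleftrightarrow> (\<forall>q. h q \<in> carrier R) \<and> finite {p. h p \<noteq> \<zero>\<^bsub>R\<^esub>}
     \<and> {p. h p \<noteq> \<zero>\<^bsub>R\<^esub>} \<subseteq> N \<times> carrier (qmod R c)
     \<and> (\<forall>S. finite S \<and> {p. h p \<noteq> \<zero>\<^bsub>R\<^esub>} \<subseteq> S \<and> S \<subseteq> N \<times> carrier (qmod R c)
           \<longrightarrow> (\<exists>y\<in>N. phi R M c S h = c \<odot>\<^bsub>M\<^esub> y))"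

locale pctx = module R M for R :: "('a,'b) ring_scheme" (structure) and M :: "('a,'m,'d) module_scheme" +
  fixes N c assumes subN: "submodule N R M" and c: "c \<in> carrier R"
begin

abbreviation "E \<equiv> qmod R c"

lemma N_sub: "N \<subseteq> carrier M" using submoduleE(1)[OF subN] .
lemma N_add: "a \<in> N \<Longrightarrow> b \<in> N \<Longrightarrow> a \<oplus>\<^bsub>M\<^esub> b \<in> N" using submoduleE(5)[OF subN] by blast
lemma N_smult: "r \<in> carrier R \<Longrightarrow> b \<in> N \<Longrightarrow> r \<odot>\<^bsub>M\<^esub> b \<in> N" using submoduleE(4)[OF subN] by blast
lemma N_zero: "\<zero>\<^bsub>M\<^esub> \<in> N"
proof -
  obtain a where "a \<in> N" using submoduleE(2)[OF subN] by blast
  then have "\<zero> \<odot>\<^bsub>M\<^esub> a \<in> N" by (rule N_smult[OF R.zero_closed])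
  then show ?thesis using \<open>a \<in> N\<close> N_sub by auto
qed

lemma rep_closed: "X \<in> carrier E \<Longrightarrow> qrep R c X \<in> carrier R"
  using qrep_cls by (auto simp: qmod_carrier)

lemma rep_cls: "u \<in> carrier R \<Longrightarrow> \<exists>t\<in>carrier R. qrep R c (qcls R c u) = u \<oplus> c \<otimes> t"
  using qrep_cls[of u] qcls_eq[OF c, of "qrep R c (qcls R c u)" u] by auto

lemma term_closed: "p \<in> N \<times> carrier E \<Longrightarrow> a \<in> carrier R \<Longrightarrow>
   a \<odot>\<^bsub>M\<^esub> (qrep R c (snd p) \<odot>\<^bsub>M\<^esub> fst p) \<in> carrier M"
  using N_sub rep_closed by auto

lemma fdelta_closed: "fdelta R p q \<in> carrier R"
  by (simp add: fdelta_def)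

lemma v_closed: "p \<in> N \<times> carrier E \<Longrightarrow> qrep R c (snd p) \<odot>\<^bsub>M\<^esub> fst p \<in> carrier M"
  using N_sub rep_closed by auto

lemma phi_closed: "S \<subseteq> N \<times> carrier E \<Longrightarrow> (\<forall>q. h q \<in> carrier R) \<Longrightarrow> phi R M c S h \<in> carrier M"
  unfolding phi_def by (rule M.finsum_closed) (use term_closed in blast)

lemma phi_add: assumes "S \<subseteq> N \<times> carrier E" "\<forall>q. h1 q \<in> carrier R" "\<forall>q. h2 q \<in> carrier R"
  shows "phi R M c S (\<lambda>q. h1 q \<oplus> h2 q) = phi R M c S h1 \<oplus>\<^bsub>M\<^esub> phi R M c S h2"
proof -
  have "phi R M c S (\<lambda>q. h1 q \<oplus> h2 q) = finsum M (\<lambda>p. h1 p \<odot>\<^bsub>M\<^esub> (qrep R c (snd p) \<odot>\<^bsub>M\<^esub> fst p)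
      \<oplus>\<^bsub>M\<^esub> h2 p \<odot>\<^bsub>M\<^esub> (qrep R c (snd p) \<odot>\<^bsub>M\<^esub> fst p)) S"
    unfolding phi_def
  proof (rule M.finsum_cong')
    fix p assume "p \<in> S"
    then have p: "p \<in> N \<times> carrier E" using assms by blast
    have "h1 p \<in> carrier R" "h2 p \<in> carrier R" using assms by blast+
    then show "(h1 p \<oplus> h2 p) \<odot>\<^bsub>M\<^esub> (qrep R c (snd p) \<odot>\<^bsub>M\<^esub> fst p) = h1 p \<odot>\<^bsub>M\<^esub> (qrep R c (snd p) \<odot>\<^bsub>M\<^esub> fst p)
      \<oplus>\<^bsub>M\<^esub> h2 p \<odot>\<^bsub>M\<^esub> (qrep R c (snd p) \<odot>\<^bsub>M\<^esub> fst p)"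
      using v_closed[OF p] by (simp add: smult_l_distr)
  next
    show "(\<lambda>p. h1 p \<odot>\<^bsub>M\<^esub> (qrep R c (snd p) \<odot>\<^bsub>M\<^esub> fst p)
      \<oplus>\<^bsub>M\<^esub> h2 p \<odot>\<^bsub>M\<^esub> (qrep R c (snd p) \<odot>\<^bsub>M\<^esub> fst p)) \<in> S \<rightarrow> carrier M"
      using assms term_closed by blast
  qed simp
  also have "\<dots> = phi R M c S h1 \<oplus>\<^bsub>M\<^esub> phi R M c S h2"
    unfolding phi_def by (rule M.finsum_addf) (use assms term_closed in blast)+
  finally show ?thesis .
qed

lemma phi_smult: assumes "S \<subseteq> N \<times> carrier E" "\<forall>q. h q \<in> carrier R" "r \<in> carrier R" "finite S"
  shows "phi R M c S (\<lambda>q. r \<otimes> h q) = r \<odot>\<^bsub>M\<^esub> phi R M c S h"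
proof -
  have "phi R M c S (\<lambda>q. r \<otimes> h q) = finsum M (\<lambda>p. r \<odot>\<^bsub>M\<^esub> (h p \<odot>\<^bsub>M\<^esub> (qrep R c (snd p) \<odot>\<^bsub>M\<^esub> fst p))) S"
    unfolding phi_def
  proof (rule M.finsum_cong')
    fix p assume "p \<in> S"
    then have p: "p \<in> N \<times> carrier E" using assms by blast
    have hp: "h p \<in> carrier R" using assms by blast
    show "(r \<otimes> h p) \<odot>\<^bsub>M\<^esub> (qrep R c (snd p) \<odot>\<^bsub>M\<^esub> fst p) = r \<odot>\<^bsub>M\<^esub> (h p \<odot>\<^bsub>M\<^esub> (qrep R c (snd p) \<odot>\<^bsub>M\<^esub> fst p))"
      by (rule smult_assoc1[OF assms(3) hp v_closed[OF p]])
  next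
    show "(\<lambda>p. r \<odot>\<^bsub>M\<^esub> (h p \<odot>\<^bsub>M\<^esub> (qrep R c (snd p) \<odot>\<^bsub>M\<^esub> fst p))) \<in> S \<rightarrow> carrier M"
      using assms term_closed by blast
  qed simp
  also have "\<dots> = r \<odot>\<^bsub>M\<^esub> phi R M c S h"
    unfolding phi_def by (rule finsum_smult_ldistr[symmetric]) (use assms term_closed in blast)+
  finally show ?thesis .
qed

lemma phi_neg: assumes "S \<subseteq> N \<times> carrier E" "\<forall>q. h q \<in> carrier R" "finite S"
  shows "phi R M c S (\<lambda>q. \<ominus> h q) = \<ominus>\<^bsub>M\<^esub> phi R M c S h"
proof -
  have "(\<lambda>q. \<ominus> h q) = (\<lambda>q. (\<ominus> \<one>) \<otimes> h q)"
  proof (rule ext)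
    fix q have "h q \<in> carrier R" using assms by blast
    then show "\<ominus> h q = (\<ominus> \<one>) \<otimes> h q" by (simp add: R.l_minus)
  qed
  then have "phi R M c S (\<lambda>q. \<ominus> h q) = phi R M c S (\<lambda>q. (\<ominus> \<one>) \<otimes> h q)" by simp
  also have "\<dots> = (\<ominus> \<one>) \<odot>\<^bsub>M\<^esub> phi R M c S h" by (rule phi_smult) (use assms in auto)
  also have "\<dots> = \<ominus>\<^bsub>M\<^esub> phi R M c S h" using phi_closed[OF assms(1,2)]
    by (simp add: smult_l_minus)
  finally show ?thesis .
qed

lemma phi_minus: assumes "S \<subseteq> N \<times> carrier E" "\<forall>q. h1 q \<in> carrier R" "\<forall>q. h2 q \<in> carrier R" "finite S"
  shows "phi R M c S (\<lambda>q. h1 q \<ominus> h2 q) = phi R M c S h1 \<ominus>\<^bsub>M\<^esub> phi R M c S h2"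
proof -
  have "(\<lambda>q. h1 q \<ominus> h2 q) = (\<lambda>q. h1 q \<oplus> \<ominus> h2 q)" by (simp add: R.minus_eq)
  moreover have "\<forall>q. \<ominus> h2 q \<in> carrier R" using assms by blast
  ultimately show ?thesis
    using phi_add[OF assms(1,2), of "\<lambda>q. \<ominus> h2 q"] phi_neg[OF assms(1,3,4)]
    by (simp add: M.minus_eq)
qed

lemma finsum_single: "f p \<in> carrier M \<Longrightarrow> finsum M f {p} = f p"
  using M.finsum_insert[of "{}" p f] by simp

lemma phi_extend: assumes "finite T" "S \<subseteq> T" "T \<subseteq> N \<times> carrier E" "\<forall>p\<in>T-S. h p = \<zero>"
   "\<forall>q. h q \<in> carrier R"
  shows "phi R M c S h = phi R M c T h"
proof -
  have T: "T = S \<union> (T - S)" using assms by blast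
  have fS: "finite S" using assms finite_subset by blast
  have "phi R M c T h = phi R M c S h \<oplus>\<^bsub>M\<^esub> phi R M c (T - S) h"
    unfolding phi_def
    by (subst T, rule M.finsum_Un_disjoint) (use assms fS term_closed in blast)+
  also have "phi R M c (T - S) h = \<zero>\<^bsub>M\<^esub>"
  proof -
    have "phi R M c (T - S) h = finsum M (\<lambda>p. \<zero>\<^bsub>M\<^esub>) (T - S)"
      unfolding phi_def
    proof (rule M.finsum_cong')
      fix p assume p: "p \<in> T - S"
      then have "p \<in> N \<times> carrier E" using assms by blast
      then show "h p \<odot>\<^bsub>M\<^esub> (qrep R c (snd p) \<odot>\<^bsub>M\<^esub> fst p) = \<zero>\<^bsub>M\<^esub>"
        using v_closed p assms(4) by simp
    qed auto
    then show ?thesis by simp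
  qed
  finally show ?thesis using phi_closed[of S h] assms by auto
qed

lemma phi_delta: assumes "finite S" "S \<subseteq> N \<times> carrier E" "p \<in> S"
  shows "phi R M c S (fdelta R p) = qrep R c (snd p) \<odot>\<^bsub>M\<^esub> fst p"
proof -
  have p: "p \<in> N \<times> carrier E" using assms by blast
  have "phi R M c S (fdelta R p) = phi R M c {p} (fdelta R p)"
    by (rule phi_extend[symmetric]) (use assms fdelta_closed in \<open>auto simp: fdelta_def\<close>)
  also have "\<dots> = fdelta R p p \<odot>\<^bsub>M\<^esub> (qrep R c (snd p) \<odot>\<^bsub>M\<^esub> fst p)"
    unfolding phi_def by (rule finsum_single) (use term_closed[OF p] fdelta_closed in blast)
  also have "\<dots> = qrep R c (snd p) \<odot>\<^bsub>M\<^esub> fst p"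
    using v_closed[OF p] by (simp add: fdelta_def)
  finally show ?thesis .
qed

end

context pctx begin

lemma grp_a: assumes "X \<in> carrier M" "Y \<in> carrier M" shows "X \<oplus>\<^bsub>M\<^esub> Y \<ominus>\<^bsub>M\<^esub> X \<ominus>\<^bsub>M\<^esub> Y = \<zero>\<^bsub>M\<^esub>"
proof -
  have "X \<oplus>\<^bsub>M\<^esub> Y \<ominus>\<^bsub>M\<^esub> X \<ominus>\<^bsub>M\<^esub> Y = (X \<oplus>\<^bsub>M\<^esub> Y) \<oplus>\<^bsub>M\<^esub> \<ominus>\<^bsub>M\<^esub> (X \<oplus>\<^bsub>M\<^esub> Y)"
    using assms by (simp add: M.minus_eq M.minus_add M.a_ac)
  then show ?thesis using assms by (simp add: M.r_neg)
qed
lemma grp_b: assumes "X \<in> carrier M" "Y \<in> carrier M" "Z \<in> carrier M"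
  shows "X \<oplus>\<^bsub>M\<^esub> Y \<oplus>\<^bsub>M\<^esub> Z \<ominus>\<^bsub>M\<^esub> X \<ominus>\<^bsub>M\<^esub> Y = Z"
proof -
  have "X \<oplus>\<^bsub>M\<^esub> Y \<oplus>\<^bsub>M\<^esub> Z \<ominus>\<^bsub>M\<^esub> X \<ominus>\<^bsub>M\<^esub> Y = Z \<oplus>\<^bsub>M\<^esub> ((X \<oplus>\<^bsub>M\<^esub> Y) \<oplus>\<^bsub>M\<^esub> \<ominus>\<^bsub>M\<^esub> (X \<oplus>\<^bsub>M\<^esub> Y))"
    using assms by (simp add: M.minus_eq M.minus_add M.a_ac)
  then show ?thesis using assms by (simp add: M.r_neg)
qed
lemma grp_c: assumes "X \<in> carrier M" "Z \<in> carrier M" shows "X \<oplus>\<^bsub>M\<^esub> Z \<ominus>\<^bsub>M\<^esub> X = Z"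
proof -
  have "X \<oplus>\<^bsub>M\<^esub> Z \<ominus>\<^bsub>M\<^esub> X = Z \<oplus>\<^bsub>M\<^esub> (X \<oplus>\<^bsub>M\<^esub> \<ominus>\<^bsub>M\<^esub> X)"
    using assms by (simp add: M.minus_eq M.a_ac)
  then show ?thesis using assms by (simp add: M.r_neg)
qed
lemma grp_d: "X \<in> carrier M \<Longrightarrow> X \<ominus>\<^bsub>M\<^esub> X = \<zero>\<^bsub>M\<^esub>"
  by (simp add: M.minus_eq M.r_neg)

lemma E_add: "e \<oplus>\<^bsub>E\<^esub> e' = qcls R c (qrep R c e \<oplus> qrep R c e')" by (simp add: qmod_def)
lemma E_smult: "r \<odot>\<^bsub>E\<^esub> e = qcls R c (r \<otimes> qrep R c e)" by (simp add: qmod_def)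
lemma E_cls: "u \<in> carrier R \<Longrightarrow> qcls R c u \<in> carrier E" by (simp add: qmod_carrier)

lemma goodI: assumes "\<forall>q. h q \<in> carrier R" "finite {p. h p \<noteq> \<zero>}" "{p. h p \<noteq> \<zero>} \<subseteq> N \<times> carrier E"
  "\<And>S. finite S \<Longrightarrow> {p. h p \<noteq> \<zero>} \<subseteq> S \<Longrightarrow> S \<subseteq> N \<times> carrier E \<Longrightarrow> \<exists>y\<in>N. phi R M c S h = c \<odot>\<^bsub>M\<^esub> y"
  shows "good R M c N h"
  unfolding good_def using assms by blast

lemma goodD: assumes "good R M c N h"
  shows "\<forall>q. h q \<in> carrier R" "finite {p. h p \<noteq> \<zero>}" "{p. h p \<noteq> \<zero>} \<subseteq> N \<times> carrier E"
  "\<And>S. finite S \<Longrightarrow> {p. h p \<noteq> \<zero>} \<subseteq> S \<Longrightarrow> S \<subseteq> N \<times> carrier E \<Longrightarrow> \<exists>y\<in>N. phi R M c S h = c \<odot>\<^bsub>M\<^esub> y"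
  using assms unfolding good_def by blast+

lemma good_zero: "good R M c N (\<lambda>q. \<zero>)"
proof -
  have "phi R M c S (\<lambda>q. \<zero>) = c \<odot>\<^bsub>M\<^esub> \<zero>\<^bsub>M\<^esub>" if "S \<subseteq> N \<times> carrier E" for S
  proof -
    have "phi R M c S (\<lambda>q. \<zero>) = finsum M (\<lambda>p. \<zero>\<^bsub>M\<^esub>) S"
      unfolding phi_def by (rule M.finsum_cong') (use that v_closed in auto)
    then show ?thesis using c by simp
  qed
  then show ?thesis by (intro goodI) (use N_zero in auto)
qed

lemma good_step: assumes f: "good R M c N f" and g: "good R M c N g" and r: "r \<in> carrier R"
  shows "good R M c N (\<lambda>q. f q \<oplus> r \<otimes> g q)"
proof -
  let ?h = "\<lambda>q. f q \<oplus> r \<otimes> g q"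
  have fv: "\<forall>q. f q \<in> carrier R" and gv: "\<forall>q. g q \<in> carrier R" using goodD(1) f g by auto
  have hv: "\<forall>q. ?h q \<in> carrier R" using fv gv r by auto
  have supp: "{p. ?h p \<noteq> \<zero>} \<subseteq> {p. f p \<noteq> \<zero>} \<union> {p. g p \<noteq> \<zero>}"
  proof
    fix p assume "p \<in> {p. ?h p \<noteq> \<zero>}"
    then show "p \<in> {p. f p \<noteq> \<zero>} \<union> {p. g p \<noteq> \<zero>}" using r by auto
  qed
  have ff: "finite {p. f p \<noteq> \<zero>}" "{p. f p \<noteq> \<zero>} \<subseteq> N \<times> carrier E" using goodD(2,3)[OF f] by auto
  have gf: "finite {p. g p \<noteq> \<zero>}" "{p. g p \<noteq> \<zero>} \<subseteq> N \<times> carrier E" using goodD(2,3)[OF g] by auto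
  have fin: "finite {p. ?h p \<noteq> \<zero>}" using supp ff gf finite_subset by blast
  have sub: "{p. ?h p \<noteq> \<zero>} \<subseteq> N \<times> carrier E" using supp ff gf by blast
  have "\<exists>y\<in>N. phi R M c S ?h = c \<odot>\<^bsub>M\<^esub> y"
    if S: "finite S" "{p. ?h p \<noteq> \<zero>} \<subseteq> S" "S \<subseteq> N \<times> carrier E" for S
  proof -
    let ?T = "S \<union> {p. f p \<noteq> \<zero>} \<union> {p. g p \<noteq> \<zero>}"
    have T: "finite ?T" "?T \<subseteq> N \<times> carrier E" using S ff gf by auto
    have ext: "\<forall>p\<in>?T-S. ?h p = \<zero>" using S(2) by blast
    have "phi R M c S ?h = phi R M c ?T ?h"
      by (rule phi_extend[OF T(1) _ T(2) ext hv]) blast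
    also have "\<dots> = phi R M c ?T f \<oplus>\<^bsub>M\<^esub> phi R M c ?T (\<lambda>q. r \<otimes> g q)"
      by (rule phi_add[OF T(2) fv]) (use gv r in simp)
    also have "phi R M c ?T (\<lambda>q. r \<otimes> g q) = r \<odot>\<^bsub>M\<^esub> phi R M c ?T g"
      by (rule phi_smult[OF T(2) gv r T(1)])
    finally have eq: "phi R M c S ?h = phi R M c ?T f \<oplus>\<^bsub>M\<^esub> r \<odot>\<^bsub>M\<^esub> phi R M c ?T g" .
    obtain y1 where y1: "y1 \<in> N" "phi R M c ?T f = c \<odot>\<^bsub>M\<^esub> y1"
      using goodD(4)[OF f T(1) _ T(2)] by blast
    obtain y2 where y2: "y2 \<in> N" "phi R M c ?T g = c \<odot>\<^bsub>M\<^esub> y2"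
      using goodD(4)[OF g T(1) _ T(2)] by blast
    have y12: "y1 \<in> carrier M" "y2 \<in> carrier M" using y1 y2 N_sub by auto
    have "phi R M c S ?h = c \<odot>\<^bsub>M\<^esub> (y1 \<oplus>\<^bsub>M\<^esub> r \<odot>\<^bsub>M\<^esub> y2)"
      unfolding eq y1 y2 using y12 r c
      by (simp add: smult_r_distr smult_assoc1[symmetric] R.m_comm)
    moreover have "y1 \<oplus>\<^bsub>M\<^esub> r \<odot>\<^bsub>M\<^esub> y2 \<in> N" using y1 y2 r N_add N_smult by auto
    ultimately show ?thesis by blast
  qed
  then show ?thesis by (intro goodI[OF hv fin sub])
qed

lemma good3: assumes p: "p1 \<in> N \<times> carrier E" "p2 \<in> N \<times> carrier E" "p3 \<in> N \<times> carrier E"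
  and v: "\<exists>y\<in>N. qrep R c (snd p1) \<odot>\<^bsub>M\<^esub> fst p1 \<ominus>\<^bsub>M\<^esub> qrep R c (snd p2) \<odot>\<^bsub>M\<^esub> fst p2
            \<ominus>\<^bsub>M\<^esub> qrep R c (snd p3) \<odot>\<^bsub>M\<^esub> fst p3 = c \<odot>\<^bsub>M\<^esub> y"
  shows "good R M c N (\<lambda>q. fdelta R p1 q \<ominus> fdelta R p2 q \<ominus> fdelta R p3 q)"
proof -
  let ?g = "\<lambda>q. fdelta R p1 q \<ominus> fdelta R p2 q \<ominus> fdelta R p3 q"
  have gv: "\<forall>q. ?g q \<in> carrier R" by (intro allI) (simp add: fdelta_closed)
  have supp: "{p. ?g p \<noteq> \<zero>} \<subseteq> {p1, p2, p3}"
  proof (rule subsetI, rule ccontr)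
    fix p assume "p \<in> {p. ?g p \<noteq> \<zero>}" "p \<notin> {p1, p2, p3}"
    then show False by (simp add: fdelta_def R.minus_eq R.r_neg)
  qed
  have fin: "finite {p. ?g p \<noteq> \<zero>}" using supp finite_subset by blast
  have sub: "{p. ?g p \<noteq> \<zero>} \<subseteq> N \<times> carrier E" using supp p by blast
  have "\<exists>y\<in>N. phi R M c S ?g = c \<odot>\<^bsub>M\<^esub> y"
    if S: "finite S" "{p. ?g p \<noteq> \<zero>} \<subseteq> S" "S \<subseteq> N \<times> carrier E" for S
  proof -
    let ?T = "S \<union> {p1, p2, p3}"
    have T: "finite ?T" "?T \<subseteq> N \<times> carrier E" using S p by auto
    have ext: "\<forall>p\<in>?T-S. ?g p = \<zero>" using S(2) by blast
    have "phi R M c S ?g = phi R M c ?T ?g"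
      by (rule phi_extend[OF T(1) _ T(2) ext gv]) blast
    also have "\<dots> = phi R M c ?T (\<lambda>q. fdelta R p1 q \<ominus> fdelta R p2 q) \<ominus>\<^bsub>M\<^esub> phi R M c ?T (fdelta R p3)"
      by (rule phi_minus[OF T(2) _ _ T(1)]) (simp_all add: fdelta_closed)
    also have "phi R M c ?T (\<lambda>q. fdelta R p1 q \<ominus> fdelta R p2 q) = phi R M c ?T (fdelta R p1) \<ominus>\<^bsub>M\<^esub> phi R M c ?T (fdelta R p2)"
      by (rule phi_minus[OF T(2) _ _ T(1)]) (simp_all add: fdelta_closed)
    finally show ?thesis using phi_delta[OF T, of p1] phi_delta[OF T, of p2] phi_delta[OF T, of p3] v by auto
  qed
  then show ?thesis by (intro goodI[OF gv fin sub])
qed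

lemma good2: assumes p: "p1 \<in> N \<times> carrier E" "p2 \<in> N \<times> carrier E" and r: "r \<in> carrier R"
  and v: "\<exists>y\<in>N. qrep R c (snd p1) \<odot>\<^bsub>M\<^esub> fst p1 \<ominus>\<^bsub>M\<^esub> r \<odot>\<^bsub>M\<^esub> (qrep R c (snd p2) \<odot>\<^bsub>M\<^esub> fst p2) = c \<odot>\<^bsub>M\<^esub> y"
  shows "good R M c N (\<lambda>q. fdelta R p1 q \<ominus> r \<otimes> fdelta R p2 q)"
proof -
  let ?g = "\<lambda>q. fdelta R p1 q \<ominus> r \<otimes> fdelta R p2 q"
  have gv: "\<forall>q. ?g q \<in> carrier R" using r by (intro allI) (simp add: fdelta_closed)
  have supp: "{p. ?g p \<noteq> \<zero>} \<subseteq> {p1, p2}"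
  proof (rule subsetI, rule ccontr)
    fix p assume "p \<in> {p. ?g p \<noteq> \<zero>}" "p \<notin> {p1, p2}"
    then show False using r by (simp add: fdelta_def R.minus_eq R.r_neg)
  qed
  have fin: "finite {p. ?g p \<noteq> \<zero>}" using supp finite_subset by blast
  have sub: "{p. ?g p \<noteq> \<zero>} \<subseteq> N \<times> carrier E" using supp p by blast
  have "\<exists>y\<in>N. phi R M c S ?g = c \<odot>\<^bsub>M\<^esub> y"
    if S: "finite S" "{p. ?g p \<noteq> \<zero>} \<subseteq> S" "S \<subseteq> N \<times> carrier E" for S
  proof -
    let ?T = "S \<union> {p1, p2}"
    have T: "finite ?T" "?T \<subseteq> N \<times> carrier E" using S p by auto
    have ext: "\<forall>p\<in>?T-S. ?g p = \<zero>" using S(2) by blast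
    have "phi R M c S ?g = phi R M c ?T ?g"
      by (rule phi_extend[OF T(1) _ T(2) ext gv]) blast
    also have "\<dots> = phi R M c ?T (fdelta R p1) \<ominus>\<^bsub>M\<^esub> phi R M c ?T (\<lambda>q. r \<otimes> fdelta R p2 q)"
      by (rule phi_minus[OF T(2) _ _ T(1)]) (use r in \<open>simp_all add: fdelta_closed\<close>)
    also have "phi R M c ?T (\<lambda>q. r \<otimes> fdelta R p2 q) = r \<odot>\<^bsub>M\<^esub> phi R M c ?T (fdelta R p2)"
      by (rule phi_smult[OF T(2) _ r T(1)]) (simp_all add: fdelta_closed)
    finally show ?thesis using phi_delta[OF T, of p1] phi_delta[OF T, of p2] v by auto
  qed
  then show ?thesis by (intro goodI[OF gv fin sub])
qed

end

context pctx begin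

lemma rep_cls': assumes "u \<in> carrier R"
  obtains t where "t \<in> carrier R" "qrep R c (qcls R c u) = u \<oplus> c \<otimes> t"
  using rep_cls[OF assms] by blast

lemma gen1: assumes "m \<in> N" "m' \<in> N" "e \<in> carrier E"
  shows "good R M c N (\<lambda>q. fdelta R (m \<oplus>\<^bsub>M\<^esub> m', e) q \<ominus> fdelta R (m, e) q \<ominus> fdelta R (m', e) q)"
proof (rule good3)
  have mm: "m \<in> carrier M" "m' \<in> carrier M" using assms N_sub by auto
  have re: "qrep R c e \<in> carrier R" using rep_closed assms by auto
  have "qrep R c e \<odot>\<^bsub>M\<^esub> (m \<oplus>\<^bsub>M\<^esub> m') \<ominus>\<^bsub>M\<^esub> qrep R c e \<odot>\<^bsub>M\<^esub> m \<ominus>\<^bsub>M\<^esub> qrep R c e \<odot>\<^bsub>M\<^esub> m' = c \<odot>\<^bsub>M\<^esub> \<zero>\<^bsub>M\<^esub>"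
    using mm re c by (simp add: smult_r_distr grp_a)
  then show "\<exists>y\<in>N. qrep R c (snd (m \<oplus>\<^bsub>M\<^esub> m', e)) \<odot>\<^bsub>M\<^esub> fst (m \<oplus>\<^bsub>M\<^esub> m', e) \<ominus>\<^bsub>M\<^esub>
      qrep R c (snd (m, e)) \<odot>\<^bsub>M\<^esub> fst (m, e) \<ominus>\<^bsub>M\<^esub> qrep R c (snd (m', e)) \<odot>\<^bsub>M\<^esub> fst (m', e) = c \<odot>\<^bsub>M\<^esub> y"
    using N_zero by auto
qed (use assms N_add in auto)

lemma gen2: assumes "m \<in> N" "e \<in> carrier E" "e' \<in> carrier E"
  shows "good R M c N (\<lambda>q. fdelta R (m, e \<oplus>\<^bsub>E\<^esub> e') q \<ominus> fdelta R (m, e) q \<ominus> fdelta R (m, e') q)"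
proof (rule good3)
  have mm: "m \<in> carrier M" using assms N_sub by auto
  have re: "qrep R c e \<in> carrier R" "qrep R c e' \<in> carrier R" using rep_closed assms by auto
  obtain t where t: "t \<in> carrier R" "qrep R c (e \<oplus>\<^bsub>E\<^esub> e') = (qrep R c e \<oplus> qrep R c e') \<oplus> c \<otimes> t"
    using rep_cls'[of "qrep R c e \<oplus> qrep R c e'"] re unfolding E_add by auto
  have "qrep R c (e \<oplus>\<^bsub>E\<^esub> e') \<odot>\<^bsub>M\<^esub> m \<ominus>\<^bsub>M\<^esub> qrep R c e \<odot>\<^bsub>M\<^esub> m \<ominus>\<^bsub>M\<^esub> qrep R c e' \<odot>\<^bsub>M\<^esub> m = c \<odot>\<^bsub>M\<^esub> (t \<odot>\<^bsub>M\<^esub> m)"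
    using mm re c t by (simp add: smult_l_distr grp_b smult_assoc1)
  moreover have "t \<odot>\<^bsub>M\<^esub> m \<in> N" using N_smult t assms by auto
  ultimately show "\<exists>y\<in>N. qrep R c (snd (m, e \<oplus>\<^bsub>E\<^esub> e')) \<odot>\<^bsub>M\<^esub> fst (m, e \<oplus>\<^bsub>E\<^esub> e') \<ominus>\<^bsub>M\<^esub>
      qrep R c (snd (m, e)) \<odot>\<^bsub>M\<^esub> fst (m, e) \<ominus>\<^bsub>M\<^esub> qrep R c (snd (m, e')) \<odot>\<^bsub>M\<^esub> fst (m, e') = c \<odot>\<^bsub>M\<^esub> y"
    by auto
qed (use assms rep_closed in \<open>auto simp: E_add E_cls\<close>)

lemma gen3: assumes "r \<in> carrier R" "m \<in> N" "e \<in> carrier E"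
  shows "good R M c N (\<lambda>q. fdelta R (r \<odot>\<^bsub>M\<^esub> m, e) q \<ominus> r \<otimes> fdelta R (m, e) q)"
proof (rule good2)
  have mm: "m \<in> carrier M" using assms N_sub by auto
  have re: "qrep R c e \<in> carrier R" using rep_closed assms by auto
  have "qrep R c e \<odot>\<^bsub>M\<^esub> (r \<odot>\<^bsub>M\<^esub> m) \<ominus>\<^bsub>M\<^esub> r \<odot>\<^bsub>M\<^esub> (qrep R c e \<odot>\<^bsub>M\<^esub> m) = c \<odot>\<^bsub>M\<^esub> \<zero>\<^bsub>M\<^esub>"
    using mm re c assms by (simp add: smult_assoc1[symmetric] R.m_comm grp_d)
  then show "\<exists>y\<in>N. qrep R c (snd (r \<odot>\<^bsub>M\<^esub> m, e)) \<odot>\<^bsub>M\<^esub> fst (r \<odot>\<^bsub>M\<^esub> m, e) \<ominus>\<^bsub>M\<^esub>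
      r \<odot>\<^bsub>M\<^esub> (qrep R c (snd (m, e)) \<odot>\<^bsub>M\<^esub> fst (m, e)) = c \<odot>\<^bsub>M\<^esub> y"
    using N_zero by auto
qed (use assms N_smult in auto)

lemma gen4: assumes "r \<in> carrier R" "m \<in> N" "e \<in> carrier E"
  shows "good R M c N (\<lambda>q. fdelta R (m, r \<odot>\<^bsub>E\<^esub> e) q \<ominus> r \<otimes> fdelta R (m, e) q)"
proof (rule good2)
  have mm: "m \<in> carrier M" using assms N_sub by auto
  have re: "qrep R c e \<in> carrier R" using rep_closed assms by auto
  obtain t where t: "t \<in> carrier R" "qrep R c (r \<odot>\<^bsub>E\<^esub> e) = (r \<otimes> qrep R c e) \<oplus> c \<otimes> t"
    using rep_cls'[of "r \<otimes> qrep R c e"] re assms unfolding E_smult by auto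
  have "qrep R c (r \<odot>\<^bsub>E\<^esub> e) \<odot>\<^bsub>M\<^esub> m \<ominus>\<^bsub>M\<^esub> r \<odot>\<^bsub>M\<^esub> (qrep R c e \<odot>\<^bsub>M\<^esub> m) = c \<odot>\<^bsub>M\<^esub> (t \<odot>\<^bsub>M\<^esub> m)"
    using mm re c t assms by (simp add: smult_l_distr grp_c smult_assoc1)
  moreover have "t \<odot>\<^bsub>M\<^esub> m \<in> N" using N_smult t assms by auto
  ultimately show "\<exists>y\<in>N. qrep R c (snd (m, r \<odot>\<^bsub>E\<^esub> e)) \<odot>\<^bsub>M\<^esub> fst (m, r \<odot>\<^bsub>E\<^esub> e) \<ominus>\<^bsub>M\<^esub>
      r \<odot>\<^bsub>M\<^esub> (qrep R c (snd (m, e)) \<odot>\<^bsub>M\<^esub> fst (m, e)) = c \<odot>\<^bsub>M\<^esub> y"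
    by auto
qed (use assms rep_closed in \<open>auto simp: E_smult E_cls\<close>)

lemma good_gens: assumes "g \<in> tensor_gens R (M\<lparr>carrier := N\<rparr>) E"
  shows "good R M c N g"
  using assms unfolding tensor_gens_def
  by (auto intro: gen1 gen2 gen3 gen4)

lemma good_rel: assumes "h \<in> tensor_rel R (M\<lparr>carrier := N\<rparr>) E"
  shows "good R M c N h"
  using assms
proof (induction rule: tensor_rel.induct)
  case zero then show ?case by (rule good_zero)
next
  case (step f g r) then show ?case using good_step good_gens by blast
qed

end

context pctx begin

lemma ring_id: assumes "a \<in> carrier R" "b \<in> carrier R" "d \<in> carrier R"
  shows "\<zero> \<oplus> \<one> \<otimes> (a \<ominus> c \<otimes> b) \<oplus> (\<ominus> \<one>) \<otimes> (d \<ominus> c \<otimes> b) \<oplus> (\<ominus> \<one>) \<otimes> (d \<ominus> d \<ominus> d) = a"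
  using assms c by algebra

lemma solve:
  assumes tinj: "tensor_injective R M N" and x: "x \<in> carrier M" and cx: "c \<odot>\<^bsub>M\<^esub> x \<in> N"
  shows "\<exists>y\<in>N. c \<odot>\<^bsub>M\<^esub> y = c \<odot>\<^bsub>M\<^esub> x"
proof -
  interpret E: module R E by (rule qmod_module[OF c])
  define e1 where "e1 = qcls R c \<one>"
  define z where "z = \<zero>\<^bsub>E\<^esub>"
  have e1E: "e1 \<in> carrier E" unfolding e1_def by (simp add: E_cls)
  have zE: "z \<in> carrier E" unfolding z_def by simp
  have zz: "z \<oplus>\<^bsub>E\<^esub> z = z" unfolding z_def by simp
  have ce1: "c \<odot>\<^bsub>E\<^esub> e1 = z"
  proof -
    have r: "qrep R c e1 \<in> carrier R" using rep_closed e1E by auto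
    have "qcls R c (c \<otimes> qrep R c e1) = qcls R c \<zero>"
      using qcls_eq[OF c _ R.zero_closed, of "c \<otimes> qrep R c e1"] r c by auto
    then show ?thesis unfolding E_smult z_def by (simp add: qmod_zero)
  qed
  define f where "f = fdelta R (c \<odot>\<^bsub>M\<^esub> x, e1)"
  define g1 where "g1 = (\<lambda>q. fdelta R (c \<odot>\<^bsub>M\<^esub> x, e1) q \<ominus> c \<otimes> fdelta R (x, e1) q)"
  define g2 where "g2 = (\<lambda>q. fdelta R (x, c \<odot>\<^bsub>E\<^esub> e1) q \<ominus> c \<otimes> fdelta R (x, e1) q)"
  define g3 where "g3 = (\<lambda>q. fdelta R (x, z \<oplus>\<^bsub>E\<^esub> z) q \<ominus> fdelta R (x, z) q \<ominus> fdelta R (x, z) q)"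
  have g1: "g1 \<in> tensor_gens R M E" unfolding g1_def tensor_gens_def
    by (rule UnI1, rule UnI2, rule CollectI, rule exI[of _ c], rule exI[of _ x], rule exI[of _ e1])
      (use c x e1E in simp)
  have g2: "g2 \<in> tensor_gens R M E" unfolding g2_def tensor_gens_def
    by (rule UnI2, rule CollectI, rule exI[of _ c], rule exI[of _ x], rule exI[of _ e1])
      (use c x e1E in simp)
  have g3: "g3 \<in> tensor_gens R M E" unfolding g3_def tensor_gens_def
    by (rule UnI1, rule UnI1, rule UnI2, rule CollectI, rule exI[of _ x], rule exI[of _ z], rule exI[of _ z])
      (use x zE in simp)
  define h1 where "h1 = (\<lambda>q. (\<lambda>q. \<zero>) q \<oplus> \<one> \<otimes> g1 q)"
  define h2 where "h2 = (\<lambda>q. h1 q \<oplus> (\<ominus> \<one>) \<otimes> g2 q)"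
  define h3 where "h3 = (\<lambda>q. h2 q \<oplus> (\<ominus> \<one>) \<otimes> g3 q)"
  have "h1 \<in> tensor_rel R M E" unfolding h1_def by (rule tensor_rel.step[OF tensor_rel.zero g1]) simp
  then have "h2 \<in> tensor_rel R M E" unfolding h2_def by (rule tensor_rel.step[OF _ g2]) simp
  then have h3: "h3 \<in> tensor_rel R M E" unfolding h3_def by (rule tensor_rel.step[OF _ g3]) simp
  have "h3 = f"
  proof
    fix q
    show "h3 q = f q"
      unfolding h3_def h2_def h1_def g1_def g2_def g3_def f_def ce1 zz
      by (rule ring_id) (simp_all add: fdelta_closed)
  qed
  with h3 have frel: "f \<in> tensor_rel R M E" by simp
  have supp: "{p. f p \<noteq> \<zero>} \<subseteq> {(c \<odot>\<^bsub>M\<^esub> x, e1)}" unfolding f_def fdelta_def by auto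
  have fin: "fsum_in R N (carrier E) f"
    unfolding fsum_in_def using supp cx e1E finite_subset[OF supp]
    by (auto simp: f_def fdelta_closed)
  have "f \<in> tensor_rel R (M\<lparr>carrier := N\<rparr>) E"
    using tinj qmod_module[OF c] fin frel unfolding tensor_injective_def by blast
  then have gf: "good R M c N f" by (rule good_rel)
  have S: "finite {(c \<odot>\<^bsub>M\<^esub> x, e1)}" "{(c \<odot>\<^bsub>M\<^esub> x, e1)} \<subseteq> N \<times> carrier E" using cx e1E by auto
  obtain y0 where y0: "y0 \<in> N" "phi R M c {(c \<odot>\<^bsub>M\<^esub> x, e1)} f = c \<odot>\<^bsub>M\<^esub> y0"
    using goodD(4)[OF gf S(1) supp S(2)] by blast
  have "phi R M c {(c \<odot>\<^bsub>M\<^esub> x, e1)} f = qrep R c e1 \<odot>\<^bsub>M\<^esub> (c \<odot>\<^bsub>M\<^esub> x)"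
    unfolding f_def using phi_delta[OF S] by simp
  moreover obtain t where t: "t \<in> carrier R" "qrep R c e1 = \<one> \<oplus> c \<otimes> t"
    using rep_cls'[of \<one>] unfolding e1_def by auto
  ultimately have eq: "(\<one> \<oplus> c \<otimes> t) \<odot>\<^bsub>M\<^esub> (c \<odot>\<^bsub>M\<^esub> x) = c \<odot>\<^bsub>M\<^esub> y0" using y0 by simp
  have cxM: "c \<odot>\<^bsub>M\<^esub> x \<in> carrier M" using c x by simp
  have y0M: "y0 \<in> carrier M" using y0 N_sub by auto
  have txN: "t \<odot>\<^bsub>M\<^esub> (c \<odot>\<^bsub>M\<^esub> x) \<in> N" using N_smult t cx by auto
  have txM: "t \<odot>\<^bsub>M\<^esub> (c \<odot>\<^bsub>M\<^esub> x) \<in> carrier M" using txN N_sub by auto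
  have "c \<odot>\<^bsub>M\<^esub> x \<oplus>\<^bsub>M\<^esub> c \<odot>\<^bsub>M\<^esub> (t \<odot>\<^bsub>M\<^esub> (c \<odot>\<^bsub>M\<^esub> x)) = c \<odot>\<^bsub>M\<^esub> y0"
    using eq cxM t c by (simp add: smult_l_distr smult_assoc1)
  then have "c \<odot>\<^bsub>M\<^esub> x \<oplus>\<^bsub>M\<^esub> c \<odot>\<^bsub>M\<^esub> (t \<odot>\<^bsub>M\<^esub> (c \<odot>\<^bsub>M\<^esub> x)) \<ominus>\<^bsub>M\<^esub> c \<odot>\<^bsub>M\<^esub> (t \<odot>\<^bsub>M\<^esub> (c \<odot>\<^bsub>M\<^esub> x))
      = c \<odot>\<^bsub>M\<^esub> y0 \<ominus>\<^bsub>M\<^esub> c \<odot>\<^bsub>M\<^esub> (t \<odot>\<^bsub>M\<^esub> (c \<odot>\<^bsub>M\<^esub> x))" by simp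
  moreover have "c \<odot>\<^bsub>M\<^esub> x \<oplus>\<^bsub>M\<^esub> c \<odot>\<^bsub>M\<^esub> (t \<odot>\<^bsub>M\<^esub> (c \<odot>\<^bsub>M\<^esub> x)) \<ominus>\<^bsub>M\<^esub> c \<odot>\<^bsub>M\<^esub> (t \<odot>\<^bsub>M\<^esub> (c \<odot>\<^bsub>M\<^esub> x))
      = c \<odot>\<^bsub>M\<^esub> x" using cxM txM c by (simp add: M.minus_eq M.a_assoc M.r_neg)
  ultimately have "c \<odot>\<^bsub>M\<^esub> x = c \<odot>\<^bsub>M\<^esub> y0 \<ominus>\<^bsub>M\<^esub> c \<odot>\<^bsub>M\<^esub> (t \<odot>\<^bsub>M\<^esub> (c \<odot>\<^bsub>M\<^esub> x))" by simp
  also have "\<dots> = c \<odot>\<^bsub>M\<^esub> (y0 \<ominus>\<^bsub>M\<^esub> t \<odot>\<^bsub>M\<^esub> (c \<odot>\<^bsub>M\<^esub> x))"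
    using y0M txM c by (simp add: M.minus_eq smult_r_distr smult_r_minus)
  finally have "c \<odot>\<^bsub>M\<^esub> (y0 \<ominus>\<^bsub>M\<^esub> t \<odot>\<^bsub>M\<^esub> (c \<odot>\<^bsub>M\<^esub> x)) = c \<odot>\<^bsub>M\<^esub> x" ..
  moreover have "y0 \<ominus>\<^bsub>M\<^esub> t \<odot>\<^bsub>M\<^esub> (c \<odot>\<^bsub>M\<^esub> x) \<in> N"
    using y0 txN N_add submoduleE(3)[OF subN] by (simp add: M.minus_eq)
  ultimately show ?thesis by blast
qed

end

lemma pure_solve:
  assumes "module R M" "pure_submodule R M N" "c \<in> carrier R" "x \<in> carrier M" "c \<odot>\<^bsub>M\<^esub> x \<in> N"
  shows "\<exists>y\<in>N. c \<odot>\<^bsub>M\<^esub> y = c \<odot>\<^bsub>M\<^esub> x"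
proof -
  interpret pctx R M N c
    by (intro pctx.intro pctx_axioms.intro) (use assms in \<open>auto simp: pure_submodule_def\<close>)
  show ?thesis by (rule solve) (use assms in \<open>auto simp: pure_submodule_def\<close>)
qed

locale mctx = module R M for R :: "('a,'b) ring_scheme" (structure) and M :: "('a,'m,'d) module_scheme" +
  fixes Ms :: "nat \<Rightarrow> 'm set" and x :: "nat \<Rightarrow> 'm" and n :: nat
  assumes M0: "Ms 0 = {\<zero>\<^bsub>M\<^esub>}"
    and pure: "\<forall>i\<le>n. pure_submodule R M (Ms i)"
    and chain: "\<forall>i\<in>{1..n}. Ms (i - 1) \<subseteq> Ms i"
    and cyc: "\<forall>i\<in>{1..n}. x i \<in> Ms i \<and>
                (\<forall>m\<in>Ms i. \<exists>r\<in>carrier R. m \<ominus>\<^bsub>M\<^esub> (r \<odot>\<^bsub>M\<^esub> x i) \<in> Ms (i - 1))"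
    and incr: "\<forall>i\<in>{1..<n}. ann_quot R M (Ms (i - 1)) (Ms i) \<subseteq> ann_quot R M (Ms i) (Ms (i + 1))"
begin

abbreviation "A k \<equiv> ann_quot R M (Ms (k - 1)) (Ms k)"

lemma subm: "i \<le> n \<Longrightarrow> submodule (Ms i) R M" using pure by (auto simp: pure_submodule_def)
lemma Ms_sub: "i \<le> n \<Longrightarrow> Ms i \<subseteq> carrier M" using submoduleE(1)[OF subm] .
lemma Ms_add: "i \<le> n \<Longrightarrow> a \<in> Ms i \<Longrightarrow> b \<in> Ms i \<Longrightarrow> a \<oplus>\<^bsub>M\<^esub> b \<in> Ms i"
  using submoduleE(5)[OF subm] by blast
lemma Ms_smult: "i \<le> n \<Longrightarrow> r \<in> carrier R \<Longrightarrow> b \<in> Ms i \<Longrightarrow> r \<odot>\<^bsub>M\<^esub> b \<in> Ms i"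
  using submoduleE(4)[OF subm] by blast
lemma Ms_neg: "i \<le> n \<Longrightarrow> a \<in> Ms i \<Longrightarrow> \<ominus>\<^bsub>M\<^esub> a \<in> Ms i"
  using submoduleE(3)[OF subm] by blast
lemma Ms_minus: "i \<le> n \<Longrightarrow> a \<in> Ms i \<Longrightarrow> b \<in> Ms i \<Longrightarrow> a \<ominus>\<^bsub>M\<^esub> b \<in> Ms i"
  using Ms_add Ms_neg by (simp add: M.minus_eq)
lemma Ms_zero: "i \<le> n \<Longrightarrow> \<zero>\<^bsub>M\<^esub> \<in> Ms i"
proof -
  assume i: "i \<le> n"
  obtain a where "a \<in> Ms i" using submoduleE(2)[OF subm[OF i]] by blast
  then have "\<zero> \<odot>\<^bsub>M\<^esub> a \<in> Ms i" by (rule Ms_smult[OF i R.zero_closed])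
  then show ?thesis using \<open>a \<in> Ms i\<close> Ms_sub[OF i] by auto
qed

lemma mono: "j \<le> n \<Longrightarrow> i \<le> j \<Longrightarrow> Ms i \<subseteq> Ms j"
proof (induction j)
  case 0 then show ?case by simp
next
  case (Suc j)
  show ?case
  proof (cases "i = Suc j")
    case True then show ?thesis by simp
  next
    case False
    then have "Ms i \<subseteq> Ms j" using Suc by auto
    moreover have "Ms j \<subseteq> Ms (Suc j)" using chain Suc.prems by (metis atLeastAtMost_iff diff_Suc_1 le_add1 plus_1_eq_Suc)
    ultimately show ?thesis by blast
  qed
qed

lemma x_in: "i \<in> {1..n} \<Longrightarrow> x i \<in> Ms i" using cyc by blast
lemma x_carr: "i \<in> {1..n} \<Longrightarrow> x i \<in> carrier M" using x_in Ms_sub by auto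

lemma cl_lemma: assumes "k \<le> n" "a \<in> {1..k} \<rightarrow> carrier R"
  shows "(\<lambda>i. a i \<odot>\<^bsub>M\<^esub> x i) \<in> {1..k} \<rightarrow> carrier M"
proof
  fix i assume i: "i \<in> {1..k}"
  then have "a i \<in> carrier R" using assms(2) by (rule funcset_mem[rotated])
  moreover have "x i \<in> carrier M" using x_carr i assms by auto
  ultimately show "a i \<odot>\<^bsub>M\<^esub> x i \<in> carrier M" by simp
qed

lemma fs_in: "k \<le> n \<Longrightarrow> a \<in> {1..k} \<rightarrow> carrier R \<Longrightarrow> finsum M (\<lambda>i. a i \<odot>\<^bsub>M\<^esub> x i) {1..k} \<in> Ms k"
proof (induction k)
  case 0 then show ?case using Ms_zero by simp
next
  case (Suc k)
  have ins: "{1..Suc k} = insert (Suc k) {1..k}" by auto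
  have xs: "x (Suc k) \<in> Ms (Suc k)" using x_in Suc.prems by auto
  have cl: "(\<lambda>i. a i \<odot>\<^bsub>M\<^esub> x i) \<in> {1..k} \<rightarrow> carrier M"
  proof
    fix i assume i: "i \<in> {1..k}"
    then have "a i \<in> carrier R" using Suc.prems(2) by (auto simp: Pi_iff)
    moreover have "x i \<in> carrier M" using x_carr i Suc.prems by auto
    ultimately show "a i \<odot>\<^bsub>M\<^esub> x i \<in> carrier M" by simp
  qed
  have "finsum M (\<lambda>i. a i \<odot>\<^bsub>M\<^esub> x i) {1..Suc k} = a (Suc k) \<odot>\<^bsub>M\<^esub> x (Suc k) \<oplus>\<^bsub>M\<^esub> finsum M (\<lambda>i. a i \<odot>\<^bsub>M\<^esub> x i) {1..k}"
    unfolding ins by (rule M.finsum_insert) (use cl Suc.prems x_carr funcset_mem[OF Suc.prems(2), of "Suc k"] in auto)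
  moreover have "a \<in> {1..k} \<rightarrow> carrier R"
    by (intro Pi_I) (use Suc.prems(2) in \<open>auto simp: Pi_def\<close>)
  then have "finsum M (\<lambda>i. a i \<odot>\<^bsub>M\<^esub> x i) {1..k} \<in> Ms k" using Suc by auto
  then have "finsum M (\<lambda>i. a i \<odot>\<^bsub>M\<^esub> x i) {1..k} \<in> Ms (Suc k)"
    using Suc.prems mono[of "Suc k" k] by auto
  moreover have "a (Suc k) \<odot>\<^bsub>M\<^esub> x (Suc k) \<in> Ms (Suc k)"
    using Ms_smult[OF Suc.prems(1) funcset_mem[OF Suc.prems(2), of "Suc k"] xs] by simp
  ultimately show ?case using Ms_add Suc.prems by auto
qed

lemma span: "k \<le> n \<Longrightarrow> m \<in> Ms k \<Longrightarrow> \<exists>d. d \<in> {1..k} \<rightarrow> carrier R \<and> m = finsum M (\<lambda>i. d i \<odot>\<^bsub>M\<^esub> x i) {1..k}"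
proof (induction k arbitrary: m)
  case 0 then show ?case using M0 by auto
next
  case (Suc k)
  have "Suc k \<in> {1..n}" using Suc.prems by auto
  then have "\<forall>m\<in>Ms (Suc k). \<exists>r\<in>carrier R. m \<ominus>\<^bsub>M\<^esub> r \<odot>\<^bsub>M\<^esub> x (Suc k) \<in> Ms (Suc k - 1)"
    using cyc by blast
  then obtain r where r: "r \<in> carrier R" "m \<ominus>\<^bsub>M\<^esub> r \<odot>\<^bsub>M\<^esub> x (Suc k) \<in> Ms k"
    using Suc.prems(2) by auto
  obtain d where d: "d \<in> {1..k} \<rightarrow> carrier R" "m \<ominus>\<^bsub>M\<^esub> r \<odot>\<^bsub>M\<^esub> x (Suc k) = finsum M (\<lambda>i. d i \<odot>\<^bsub>M\<^esub> x i) {1..k}"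
    using Suc r by auto
  define d' where "d' = d(Suc k := r)"
  have ins: "{1..Suc k} = insert (Suc k) {1..k}" by auto
  have cl: "(\<lambda>i. d' i \<odot>\<^bsub>M\<^esub> x i) \<in> {1..k} \<rightarrow> carrier M"
  proof
    fix i assume i: "i \<in> {1..k}"
    then have "d' i \<in> carrier R" using d(1) by (auto simp: Pi_iff d'_def)
    moreover have "x i \<in> carrier M" using x_carr i Suc.prems by auto
    ultimately show "d' i \<odot>\<^bsub>M\<^esub> x i \<in> carrier M" by simp
  qed
  have xk: "x (Suc k) \<in> carrier M" using x_carr Suc.prems by auto
  have mM: "m \<in> carrier M" using Ms_sub Suc.prems by auto
  have eq1: "finsum M (\<lambda>i. d' i \<odot>\<^bsub>M\<^esub> x i) {1..Suc k} = d' (Suc k) \<odot>\<^bsub>M\<^esub> x (Suc k) \<oplus>\<^bsub>M\<^esub> finsum M (\<lambda>i. d' i \<odot>\<^bsub>M\<^esub> x i) {1..k}"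
    unfolding ins by (rule M.finsum_insert) (use cl r xk in \<open>auto simp: d'_def\<close>)
  have eq2: "finsum M (\<lambda>i. d' i \<odot>\<^bsub>M\<^esub> x i) {1..k} = finsum M (\<lambda>i. d i \<odot>\<^bsub>M\<^esub> x i) {1..k}"
    by (rule M.finsum_cong') (use cl_lemma[of k d] d Suc.prems in \<open>auto simp: d'_def\<close>)
  have eq3: "d' (Suc k) \<odot>\<^bsub>M\<^esub> x (Suc k) \<oplus>\<^bsub>M\<^esub> (m \<ominus>\<^bsub>M\<^esub> r \<odot>\<^bsub>M\<^esub> x (Suc k)) = m"
    unfolding d'_def using r xk mM M.a_lcomm[of "r \<odot>\<^bsub>M\<^esub> x (Suc k)" m "\<ominus>\<^bsub>M\<^esub> (r \<odot>\<^bsub>M\<^esub> x (Suc k))"]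
      M.r_neg[of "r \<odot>\<^bsub>M\<^esub> x (Suc k)"] by (simp add: M.minus_eq)
  have "m = finsum M (\<lambda>i. d' i \<odot>\<^bsub>M\<^esub> x i) {1..Suc k}" using eq1 eq2 eq3 d(2) by simp
  moreover have "d' \<in> {1..Suc k} \<rightarrow> carrier R" using d r unfolding d'_def by auto
  ultimately show ?case by blast
qed

end

context mctx begin

lemma modRM: "module R M" by intro_locales

lemma lin: assumes "k \<le> n" "a \<in> {1..k} \<rightarrow> carrier R" "b \<in> {1..k} \<rightarrow> carrier R" "r \<in> carrier R"
  shows "finsum M (\<lambda>i. (a i \<oplus> r \<otimes> b i) \<odot>\<^bsub>M\<^esub> x i) {1..k}
     = finsum M (\<lambda>i. a i \<odot>\<^bsub>M\<^esub> x i) {1..k} \<oplus>\<^bsub>M\<^esub> r \<odot>\<^bsub>M\<^esub> finsum M (\<lambda>i. b i \<odot>\<^bsub>M\<^esub> x i) {1..k}"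
proof -
  have ca: "(\<lambda>i. a i \<odot>\<^bsub>M\<^esub> x i) \<in> {1..k} \<rightarrow> carrier M" by (rule cl_lemma[OF assms(1,2)])
  have cb: "(\<lambda>i. b i \<odot>\<^bsub>M\<^esub> x i) \<in> {1..k} \<rightarrow> carrier M" by (rule cl_lemma[OF assms(1,3)])
  have cr: "(\<lambda>i. r \<odot>\<^bsub>M\<^esub> (b i \<odot>\<^bsub>M\<^esub> x i)) \<in> {1..k} \<rightarrow> carrier M" using cb assms(4) by auto
  have "finsum M (\<lambda>i. (a i \<oplus> r \<otimes> b i) \<odot>\<^bsub>M\<^esub> x i) {1..k}
      = finsum M (\<lambda>i. a i \<odot>\<^bsub>M\<^esub> x i \<oplus>\<^bsub>M\<^esub> r \<odot>\<^bsub>M\<^esub> (b i \<odot>\<^bsub>M\<^esub> x i)) {1..k}"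
  proof (rule M.finsum_cong')
    fix i assume i: "i \<in> {1..k}"
    have ai: "a i \<in> carrier R" "b i \<in> carrier R" using funcset_mem[OF assms(2) i] funcset_mem[OF assms(3) i] by auto
    have xi: "x i \<in> carrier M" using x_carr i assms by auto
    show "(a i \<oplus> r \<otimes> b i) \<odot>\<^bsub>M\<^esub> x i = a i \<odot>\<^bsub>M\<^esub> x i \<oplus>\<^bsub>M\<^esub> r \<odot>\<^bsub>M\<^esub> (b i \<odot>\<^bsub>M\<^esub> x i)"
      using ai xi assms(4) by (simp add: smult_l_distr smult_assoc1)
  qed (use ca cr in auto)
  also have "\<dots> = finsum M (\<lambda>i. a i \<odot>\<^bsub>M\<^esub> x i) {1..k} \<oplus>\<^bsub>M\<^esub> finsum M (\<lambda>i. r \<odot>\<^bsub>M\<^esub> (b i \<odot>\<^bsub>M\<^esub> x i)) {1..k}"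
    by (rule M.finsum_addf[OF ca cr])
  also have "finsum M (\<lambda>i. r \<odot>\<^bsub>M\<^esub> (b i \<odot>\<^bsub>M\<^esub> x i)) {1..k} = r \<odot>\<^bsub>M\<^esub> finsum M (\<lambda>i. b i \<odot>\<^bsub>M\<^esub> x i) {1..k}"
    by (rule finsum_smult_ldistr[symmetric]) (use assms cb in auto)
  finally show ?thesis .
qed

lemma ann_mem: assumes k: "k \<in> {1..n}" and r: "r \<in> carrier R" and rx: "r \<odot>\<^bsub>M\<^esub> x k \<in> Ms (k - 1)"
  shows "r \<in> A k"
  unfolding ann_quot_def
proof (intro CollectI conjI ballI r)
  fix m assume m: "m \<in> Ms k"
  obtain s where s: "s \<in> carrier R" "m \<ominus>\<^bsub>M\<^esub> s \<odot>\<^bsub>M\<^esub> x k \<in> Ms (k - 1)" using cyc k m by blast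
  have mM: "m \<in> carrier M" using m Ms_sub k by auto
  have xk: "x k \<in> carrier M" using x_carr k by auto
  have k1: "k - 1 \<le> n" using k by auto
  have "r \<odot>\<^bsub>M\<^esub> m = r \<odot>\<^bsub>M\<^esub> (m \<ominus>\<^bsub>M\<^esub> s \<odot>\<^bsub>M\<^esub> x k) \<oplus>\<^bsub>M\<^esub> s \<odot>\<^bsub>M\<^esub> (r \<odot>\<^bsub>M\<^esub> x k)"
  proof -
    have e: "s \<odot>\<^bsub>M\<^esub> (r \<odot>\<^bsub>M\<^esub> x k) = r \<odot>\<^bsub>M\<^esub> (s \<odot>\<^bsub>M\<^esub> x k)"
      using r s xk by (simp add: smult_assoc1[symmetric] R.m_comm)
    have "r \<odot>\<^bsub>M\<^esub> (m \<ominus>\<^bsub>M\<^esub> s \<odot>\<^bsub>M\<^esub> x k) = r \<odot>\<^bsub>M\<^esub> m \<ominus>\<^bsub>M\<^esub> r \<odot>\<^bsub>M\<^esub> (s \<odot>\<^bsub>M\<^esub> x k)"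
      using r s xk mM by (simp add: M.minus_eq smult_r_distr smult_r_minus)
    then show ?thesis unfolding e using r s xk mM
      by (simp add: M.minus_eq M.a_assoc M.l_neg)
  qed
  also have "\<dots> \<in> Ms (k - 1)"
    using Ms_add[OF k1] Ms_smult[OF k1] s rx r by auto
  finally show "r \<odot>\<^bsub>M\<^esub> m \<in> Ms (k - 1)" .
qed

lemma ann_ideal: assumes k: "k \<in> {1..n}" and a: "a \<in> A k" and b: "b \<in> A k" and d: "d \<in> carrier R"
  shows "a \<ominus> d \<otimes> b \<in> A k"
  unfolding ann_quot_def
proof (intro CollectI conjI ballI)
  have aR: "a \<in> carrier R" and bR: "b \<in> carrier R" using a b by (auto simp: ann_quot_def)
  then show "a \<ominus> d \<otimes> b \<in> carrier R" using d by simp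
  fix m assume m: "m \<in> Ms k"
  have mM: "m \<in> carrier M" using m Ms_sub k by auto
  have k1: "k - 1 \<le> n" using k by auto
  have am: "a \<odot>\<^bsub>M\<^esub> m \<in> Ms (k - 1)" "b \<odot>\<^bsub>M\<^esub> m \<in> Ms (k - 1)" using a b m by (auto simp: ann_quot_def)
  have "(a \<ominus> d \<otimes> b) \<odot>\<^bsub>M\<^esub> m = a \<odot>\<^bsub>M\<^esub> m \<ominus>\<^bsub>M\<^esub> d \<odot>\<^bsub>M\<^esub> (b \<odot>\<^bsub>M\<^esub> m)"
    using aR bR d mM by (simp add: R.minus_eq M.minus_eq smult_l_distr smult_l_minus smult_assoc1)
  also have "\<dots> \<in> Ms (k - 1)" using Ms_minus[OF k1] Ms_smult[OF k1] am d by auto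
  finally show "(a \<ominus> d \<otimes> b) \<odot>\<^bsub>M\<^esub> m \<in> Ms (k - 1)" .
qed

end

context mctx begin

lemma main: "k \<le> n \<Longrightarrow> (\<forall>i\<in>{1..k}. cc i \<in> carrier R) \<Longrightarrow>
   finsum M (\<lambda>i. cc i \<odot>\<^bsub>M\<^esub> x i) {1..k} = \<zero>\<^bsub>M\<^esub> \<Longrightarrow> \<forall>i\<in>{1..k}. cc i \<in> A k"
proof (induction k arbitrary: cc)
  case 0 then show ?case by simp
next
  case (Suc k)
  have kn: "k \<le> n" "Suc k \<le> n" using Suc.prems by auto
  have K: "Suc k \<in> {1..n}" using kn by auto
  have ccK: "cc (Suc k) \<in> carrier R" using Suc.prems by auto
  have ccP: "cc \<in> {1..k} \<rightarrow> carrier R" using Suc.prems(2) by auto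
  define s where "s = finsum M (\<lambda>i. cc i \<odot>\<^bsub>M\<^esub> x i) {1..k}"
  have sMs: "s \<in> Ms k" unfolding s_def by (rule fs_in[OF kn(1) ccP])
  have sM: "s \<in> carrier M" using sMs Ms_sub[OF kn(1)] by auto
  have xK: "x (Suc k) \<in> carrier M" using x_carr K by auto
  have ins: "{1..Suc k} = insert (Suc k) {1..k}" by auto
  have "finsum M (\<lambda>i. cc i \<odot>\<^bsub>M\<^esub> x i) {1..Suc k} = cc (Suc k) \<odot>\<^bsub>M\<^esub> x (Suc k) \<oplus>\<^bsub>M\<^esub> s"
    unfolding ins s_def by (rule M.finsum_insert) (use cl_lemma[OF kn(1) ccP] ccK xK in auto)
  then have rel: "cc (Suc k) \<odot>\<^bsub>M\<^esub> x (Suc k) \<oplus>\<^bsub>M\<^esub> s = \<zero>\<^bsub>M\<^esub>" using Suc.prems(3) by simp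
  have negs: "\<ominus>\<^bsub>M\<^esub> s = cc (Suc k) \<odot>\<^bsub>M\<^esub> x (Suc k)"
    by (rule M.minus_equality) (use rel sM ccK xK in auto)
  have cxin: "cc (Suc k) \<odot>\<^bsub>M\<^esub> x (Suc k) \<in> Ms k" using Ms_neg[OF kn(1) sMs] negs by simp
  have ccA: "cc (Suc k) \<in> A (Suc k)" by (rule ann_mem[OF K ccK]) (use cxin in simp)
  obtain y where y: "y \<in> Ms k" "cc (Suc k) \<odot>\<^bsub>M\<^esub> y = cc (Suc k) \<odot>\<^bsub>M\<^esub> x (Suc k)"
    using pure_solve[OF modRM _ ccK xK cxin] pure kn by blast
  obtain d where d: "d \<in> {1..k} \<rightarrow> carrier R" "y = finsum M (\<lambda>i. d i \<odot>\<^bsub>M\<^esub> x i) {1..k}"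
    using span[OF kn(1) y(1)] by blast
  show ?case
  proof
    fix i assume i: "i \<in> {1..Suc k}"
    show "cc i \<in> A (Suc k)"
    proof (cases "i = Suc k")
      case True then show ?thesis using ccA by simp
    next
      case False
      then have i': "i \<in> {1..k}" using i by auto
      then have k1: "k \<in> {1..<n}" using kn by auto
      define cc' where "cc' = (\<lambda>j. cc j \<oplus> cc (Suc k) \<otimes> d j)"
      have cc'R: "\<forall>j\<in>{1..k}. cc' j \<in> carrier R"
        unfolding cc'_def using ccP d(1) ccK by (auto intro!: R.a_closed R.m_closed dest: funcset_mem)
      have "finsum M (\<lambda>j. cc' j \<odot>\<^bsub>M\<^esub> x j) {1..k} = s \<oplus>\<^bsub>M\<^esub> cc (Suc k) \<odot>\<^bsub>M\<^esub> y"
        unfolding cc'_def s_def d(2) by (rule lin[OF kn(1) ccP d(1) ccK])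
      also have "\<dots> = \<zero>\<^bsub>M\<^esub>" using y(2) rel sM ccK xK by (simp add: M.a_comm)
      finally have "\<forall>j\<in>{1..k}. cc' j \<in> A k" using Suc.IH[OF kn(1) cc'R] by blast
      moreover have "A k \<subseteq> A (Suc k)" using bspec[OF incr k1] by simp
      ultimately have c'A: "cc' i \<in> A (Suc k)" using i' by blast
      have diR: "d i \<in> carrier R" using funcset_mem[OF d(1) i'] .
      have ciR: "cc i \<in> carrier R" using funcset_mem[OF ccP i'] .
      have "cc i = cc' i \<ominus> d i \<otimes> cc (Suc k)" unfolding cc'_def using diR ciR ccK by algebra
      also have "\<dots> \<in> A (Suc k)" by (rule ann_ideal[OF K c'A ccA diR])
      finally show ?thesis .
    qed
  qed
qed

end

theorem lemma3p2:
  fixes R :: "'a ring" and M :: "('a, 'm) module"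
    and Ms :: "nat \<Rightarrow> 'm set" and x :: "nat \<Rightarrow> 'm" and c :: "nat \<Rightarrow> 'a" and n :: nat
  assumes arith: "arithmetic_ring R"
    and modM: "module R M"
    and fg: "fin_gen_module R M"
    and M0: "Ms 0 = {\<zero>\<^bsub>M\<^esub>}"
    and Mn: "Ms n = carrier M"
    and pure: "\<forall>i\<le>n. pure_submodule R M (Ms i)"
    and chain: "\<forall>i\<in>{1..n}. Ms (i - 1) \<subseteq> Ms i"
    and cyc: "\<forall>i\<in>{1..n}. x i \<in> Ms i \<and>
                (\<forall>m\<in>Ms i. \<exists>r\<in>carrier R. m \<ominus>\<^bsub>M\<^esub> (r \<odot>\<^bsub>M\<^esub> x i) \<in> Ms (i - 1))"
    and incr: "\<forall>i\<in>{1..<n}. ann_quot R M (Ms (i - 1)) (Ms i) \<subseteq> ann_quot R M (Ms i) (Ms (i + 1))"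
    and c_in: "\<forall>i\<in>{1..n}. c i \<in> carrier R"
    and rel: "finsum M (\<lambda>i. c i \<odot>\<^bsub>M\<^esub> x i) {1..n} = \<zero>\<^bsub>M\<^esub>"
  shows "\<forall>i\<in>{1..n}. c i \<in> ann_quot R M (Ms (n - 1)) (Ms n)"
proof -
  interpret mctx R M Ms x n
    by (intro mctx.intro mctx_axioms.intro modM) (use M0 pure chain cyc incr in auto)
  show ?thesis by (rule main[OF order_refl c_in rel])
qed

end
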